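(* Let $\Omega\subset\mathbb{R}^d$ ($d=2,3$) be a convex polygonal domain with a conforming mesh $\mathcal T$ of quadrilaterals/hexahedra, vertices $\vec x_i$, and let $\mathbb Q_1$ be the space of continuous piecewise bilinear (trilinear) functions on $\mathcal T$. Fix $\mathrm{Wi}>0$, $\beta\in(0,1)$, and a Dirichlet datum $\vec w$ with $\vec w\cdot\vec n=0$ on $\partial\Omega$. Consider the following fully discrete scheme for the Stokes flow of an Oldroyd-B fluid. Let $\vec\Sigma^0_h$ be the bilinear (trilinear) interpolant of a symmetric initial conformation tensor $\boldsymbol\sigma^0$. For $n\ge1$: (i) find $\vec u^n_h\in\mathbb Q_1^d$ with $\vec u^n_h|_{\partial\Omega}=\Pi_1\vec w$ and $p^n_h\in\mathbb Q_1$ with $$2\beta\int_\Omega\varepsilon(\vec u^n_h):\varepsilon(\vec v_h)-\int_\Omega p^n_h\operatorname{div}\vec v_h-\int_\Omega q_h\operatorname{div}\vec u^n_h-\int_\Omega(p^n_h-\Pi_0p^n_h)(q_h-\Pi_0q_h)=\frac{\beta-1}{\mathrm{Wi}}\int_\Omega\vec\Sigma^{n-1}_h:\varepsilon(\vec v_h)$$ for all $\vec v_h\in\mathbb Q_1^d$ vanishing on $\partial\Omega$ and all $q_h\in\mathbb Q_1$; (ii) at each vertex $\vec x_i$ compute $$\tfrac{1}{\Delta t}\big(\vec\Sigma^n_h(\vec x_i)-\vec F^n_{h,\Delta t}(\vec x_i)\,\vec\Sigma^{n-1}_h(\vec y^n_{h,\Delta t}(\vec x_i))\,\vec F^n_{h,\Delta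 t}(\vec x_i)^T\big)+\tfrac{1}{\mathrm{Wi}}(\vec\Sigma^n_h(\vec x_i)-\vec I)=0,$$ where $\vec y^n_{h,\Delta t}(\vec x)=\vec x-\Delta t\,\vec u^n_h(\vec x)$, $\vec F^n_{h,\Delta t}(\vec x_i)=\vec I+\Delta t\,\nabla\vec u^n_h(\vec x_i)$ with $\nabla\vec u^n_h(\vec x_i):=\frac{1}{|\hat{\vec x}_i|}\sum_{K\subseteq\hat{\vec x}_i}\int_K\nabla\vec u^n_h$, and $\vec\Sigma^{n-1}_h$ is evaluated at non-vertex points by bilinear (trilinear) interpolation of its vertex values. If $\boldsymbol\sigma^0$ is positive definite, then at each time step there exists $\Delta t>0$ such that the discrete conformation tensor $\vec\Sigma^n_h$ remains positive definite.
   Context: $\varepsilon(\vec v)=\tfrac12(\nabla\vec v+(\nabla\vec v)^T)$; $\Pi_0$ is the $L^2$ projection onto piecewise constants on $\mathcal T$; $\Pi_1$ is an interpolant onto $\mathbb Q_1$ traces; $\hat{\vec x}_i=\{K\in\mathcal T:\vec x_i\in\overline K\}$ is the patch of elements around vertex $\vec x_i$; $\vec I$ is the identity. The discrete conformation tensor is stored by its values at vertices and identified with the $\mathbb Q_1$ interpolant of these values. *)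

theory Defs
  imports "HOL-Analysis.Analysis"
begin

definition unit_cube :: "(real^'d) set" where
  "unit_cube = {\<xi>. \<forall>i. 0 \<le> \<xi>$i \<and> \<xi>$i \<le> 1}"

definition corners :: "(real^'d) set" where
  "corners = {c. \<forall>i. c$i = 0 \<or> c$i = 1}"

definition shape :: "real^'d \<Rightarrow> real^'d \<Rightarrow> real" where
  "shape c \<xi> = (\<Prod>i\<in>UNIV. if c$i = 1 then \<xi>$i else 1 - \<xi>$i)"

text \<open>An element is given by its vertex labelling X (corner of the reference cube to
  physical vertex); qmap X is the bilinear/trilinear reference map.\<close>
definition qmap :: "(real^'d \<Rightarrow> real^'d) \<Rightarrow> real^'d \<Rightarrow> real^'d" where
  "qmap X \<xi> = (\<Sum>c\<in>corners. shape c \<xi> *\<^sub>R X c)"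

definition elem :: "(real^'d \<Rightarrow> real^'d) \<Rightarrow> (real^'d) set" where
  "elem X = qmap X ` unit_cube"

definition cube_face :: "(real^'d) set \<Rightarrow> bool" where
  "cube_face G \<longleftrightarrow> (\<exists>J b. b \<in> corners \<and> G = {\<xi>\<in>unit_cube. \<forall>i\<in>J. \<xi>$i = b$i})"

definition conforming :: "(real^'d \<Rightarrow> real^'d) set \<Rightarrow> bool" where
  "conforming T \<longleftrightarrow> (\<forall>X\<in>T. \<forall>X'\<in>T. elem X \<inter> elem X' = {} \<or>
     (\<exists>G G'. cube_face G \<and> cube_face G' \<and>
        elem X \<inter> elem X' = qmap X ` G \<and> elem X \<inter> elem X' = qmap X' ` G' \<and>
        X ` (corners \<inter> G) = X' ` (corners \<inter> G')))"

definition qmesh :: "(real^'d) set \<Rightarrow> (real^'d \<Rightarrow> real^'d) set \<Rightarrow> bool" where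
  "qmesh \<Omega> T \<longleftrightarrow> finite T \<and> T \<noteq> {} \<and>
     (\<forall>X\<in>T. inj_on (qmap X) unit_cube) \<and>
     \<Union>(elem ` T) = closure \<Omega> \<and>
     (\<forall>X\<in>T. \<forall>X'\<in>T. X \<noteq> X' \<longrightarrow> interior (elem X) \<inter> interior (elem X') = {}) \<and>
     conforming T"

definition verts :: "(real^'d \<Rightarrow> real^'d) set \<Rightarrow> (real^'d) set" where
  "verts T = {X c | X c. X \<in> T \<and> c \<in> corners}"

definition q1_fun :: "(real^'d) set \<Rightarrow> (real^'d \<Rightarrow> real^'d) set \<Rightarrow> (real^'d \<Rightarrow> 'b::real_normed_vector) \<Rightarrow> bool" where
  "q1_fun \<Omega> T f \<longleftrightarrow> continuous_on (closure \<Omega>) f \<and>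
     (\<forall>X\<in>T. \<forall>\<xi>\<in>unit_cube. f (qmap X \<xi>) = (\<Sum>c\<in>corners. shape c \<xi> *\<^sub>R f (X c)))"

definition grad :: "(real^'d \<Rightarrow> real^'d) \<Rightarrow> real^'d \<Rightarrow> real^'d^'d" where
  "grad u x = jacobian u (at x)"

definition eps :: "(real^'d \<Rightarrow> real^'d) \<Rightarrow> real^'d \<Rightarrow> real^'d^'d" where
  "eps u x = (1/2) *\<^sub>R (grad u x + transpose (grad u x))"

definition divg :: "(real^'d \<Rightarrow> real^'d) \<Rightarrow> real^'d \<Rightarrow> real" where
  "divg u x = trace (grad u x)"

definition frob :: "real^'d^'d \<Rightarrow> real^'d^'d \<Rightarrow> real" where
  "frob A B = (\<Sum>i\<in>UNIV. \<Sum>j\<in>UNIV. A$i$j * B$i$j)"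

definition pos_def :: "real^'d^'d \<Rightarrow> bool" where
  "pos_def A \<longleftrightarrow> transpose A = A \<and> (\<forall>v. v \<noteq> 0 \<longrightarrow> v \<bullet> (A *v v) > 0)"

definition pi0 :: "(real^'d \<Rightarrow> real^'d) set \<Rightarrow> (real^'d \<Rightarrow> real) \<Rightarrow> real^'d \<Rightarrow> real" where
  "pi0 T f x = (if \<exists>X\<in>T. x \<in> interior (elem X)
     then (let X = (SOME X. X \<in> T \<and> x \<in> interior (elem X))
           in integral (elem X) f / measure lebesgue (elem X))
     else 0)"

text \<open>w \<cdot> n = 0 on the boundary of the convex polytope closure \<Omega> (on every facet).\<close>
definition tangential :: "(real^'d) set \<Rightarrow> (real^'d \<Rightarrow> real^'d) \<Rightarrow> bool" where
  "tangential \<Omega> w \<longleftrightarrow> (\<forall>a b. closure \<Omega> \<subseteq> {y. a \<bullet> y \<le> b} \<and>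
      (closure \<Omega> \<inter> {y. a \<bullet> y = b}) facet_of (closure \<Omega>) \<longrightarrow>
      (\<forall>x \<in> closure \<Omega> \<inter> {y. a \<bullet> y = b}. w x \<bullet> a = 0))"

definition stokes_step :: "(real^'d) set \<Rightarrow> (real^'d \<Rightarrow> real^'d) set \<Rightarrow> real \<Rightarrow> real \<Rightarrow>
    (real^'d \<Rightarrow> real^'d) \<Rightarrow> (real^'d \<Rightarrow> real^'d^'d) \<Rightarrow> (real^'d \<Rightarrow> real^'d) \<Rightarrow> (real^'d \<Rightarrow> real) \<Rightarrow> bool" where
  "stokes_step \<Omega> T \<beta> Wi w \<Sigma> u p \<longleftrightarrow>
     q1_fun \<Omega> T u \<and> q1_fun \<Omega> T p \<and>
     (\<forall>x\<in>verts T \<inter> frontier \<Omega>. u x = w x) \<and>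
     (\<forall>v q. q1_fun \<Omega> T v \<and> (\<forall>x\<in>frontier \<Omega>. v x = 0) \<and> q1_fun \<Omega> T q \<longrightarrow>
        2 * \<beta> * integral \<Omega> (\<lambda>x. frob (eps u x) (eps v x))
        - integral \<Omega> (\<lambda>x. p x * divg v x)
        - integral \<Omega> (\<lambda>x. q x * divg u x)
        - integral \<Omega> (\<lambda>x. (p x - pi0 T p x) * (q x - pi0 T q x))
        = (\<beta> - 1) / Wi * integral \<Omega> (\<lambda>x. frob (\<Sigma> x) (eps v x)))"

definition patch_grad :: "(real^'d \<Rightarrow> real^'d) set \<Rightarrow> (real^'d \<Rightarrow> real^'d) \<Rightarrow> real^'d \<Rightarrow> real^'d^'d" where
  "patch_grad T u x =
     (1 / measure lebesgue (\<Union>{elem X | X. X \<in> T \<and> x \<in> elem X})) *\<^sub>R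
     (\<Sum>X\<in>{X\<in>T. x \<in> elem X}. integral (elem X) (\<lambda>z. jacobian u (at z within elem X)))"

text \<open>Step (ii) at a vertex x: S is the new value \<Sigma>^n_h(x).\<close>
definition transport_eq :: "(real^'d \<Rightarrow> real^'d) set \<Rightarrow> real \<Rightarrow> real \<Rightarrow> (real^'d \<Rightarrow> real^'d) \<Rightarrow>
    (real^'d \<Rightarrow> real^'d^'d) \<Rightarrow> real^'d \<Rightarrow> real^'d^'d \<Rightarrow> bool" where
  "transport_eq T Wi dt u \<Sigma> x S \<longleftrightarrow>
     (let y = x - dt *\<^sub>R u x;
          F = mat 1 + dt *\<^sub>R patch_grad T u x
      in (1 / dt) *\<^sub>R (S - F ** \<Sigma> y ** transpose F) + (1 / Wi) *\<^sub>R (S - mat 1) = 0)"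

text \<open>Conformation tensors reachable by the scheme from the interpolant of \<sigma>0,
  each time step being taken with some \<Delta>t > 0 that kept the tensor positive definite.\<close>
inductive admissible for \<Omega> :: "(real^'d) set" and T \<beta> Wi w \<sigma>0 where
  base: "q1_fun \<Omega> T \<Sigma> \<Longrightarrow> (\<forall>x\<in>verts T. \<Sigma> x = \<sigma>0 x) \<Longrightarrow> admissible \<Omega> T \<beta> Wi w \<sigma>0 \<Sigma>"
| step: "admissible \<Omega> T \<beta> Wi w \<sigma>0 \<Sigma> \<Longrightarrow> stokes_step \<Omega> T \<beta> Wi w \<Sigma> u p \<Longrightarrow> dt > 0 \<Longrightarrow>
         q1_fun \<Omega> T \<Sigma>' \<Longrightarrow> (\<forall>x\<in>verts T. transport_eq T Wi dt u \<Sigma> x (\<Sigma>' x)) \<Longrightarrow>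
         (\<forall>x\<in>verts T. pos_def (\<Sigma>' x)) \<Longrightarrow> admissible \<Omega> T \<beta> Wi w \<sigma>0 \<Sigma>'"

end

theory Submission
  imports Defs
begin

lemma transpose_sum: "finite C \<Longrightarrow> transpose (\<Sum>c\<in>C. f c :: real^'n^'n) = (\<Sum>c\<in>C. transpose (f c))"
  by (induction C rule: finite_induct) (auto simp: transpose_def vec_eq_iff)

lemma transpose_add': "transpose (A + B :: real^'n^'n) = transpose A + transpose B"
  by (auto simp: transpose_def vec_eq_iff)

lemma transpose_diff': "transpose (A - B :: real^'n^'n) = transpose A - transpose B"
  by (auto simp: transpose_def vec_eq_iff)

lemma quad_sum: "finite C \<Longrightarrow> v \<bullet> ((\<Sum>c\<in>C. s c *\<^sub>R (A c :: real^'n^'n)) *v v) = (\<Sum>c\<in>C. s c * (v \<bullet> (A c *v v)))"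
  by (induction C rule: finite_induct)
     (auto simp: matrix_vector_mult_add_rdistrib inner_add_right scaleR_matrix_vector_assoc[symmetric])

lemma quad_FAF: fixes F :: "real^'m^'n" and A :: "real^'m^'m" and v :: "real^'n" shows "v \<bullet> ((F ** A ** transpose F) *v v) = (transpose F *v v) \<bullet> (A *v (transpose F *v v))"
proof -
  have e: "v \<bullet> (F *v z) = (transpose F *v v) \<bullet> z" for z :: "real^'m"
    by (simp only: transpose_matrix_vector dot_lmul_matrix)
  have "(F ** A ** transpose F) *v v = F *v (A *v (transpose F *v v))"
    by (simp only: matrix_vector_mul_assoc matrix_mul_assoc)
  then show ?thesis using e by simp
qed

lemma pos_def_comb:
  assumes "finite C" "\<forall>c\<in>C. s c \<ge> 0" "c0 \<in> C" "s c0 > 0" "\<forall>c\<in>C. pos_def (A c)"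
  shows "pos_def (\<Sum>c\<in>C. s c *\<^sub>R (A c :: real^'n^'n))"
  unfolding pos_def_def
proof safe
  show "transpose (\<Sum>c\<in>C. s c *\<^sub>R A c) = (\<Sum>c\<in>C. s c *\<^sub>R A c)"
    using assms by (simp add: transpose_sum transpose_scalar pos_def_def)
  fix v :: "real^'n" assume "v \<noteq> 0"
  then have "\<forall>c\<in>C. v \<bullet> (A c *v v) > 0" using assms(5) by (auto simp: pos_def_def)
  then show "0 < v \<bullet> ((\<Sum>c\<in>C. s c *\<^sub>R A c) *v v)"
    unfolding quad_sum[OF assms(1)]
    using assms by (intro sum_pos2[where i=c0]) auto
qed

lemma transport_pd:
  fixes S M :: "real^'n^'n"
  assumes dt: "dt > 0" and Wi: "Wi > 0" and A: "pos_def A"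
    and eq: "(1 / dt) *\<^sub>R (S - F ** A ** transpose F) + (1 / Wi) *\<^sub>R (S - mat 1) = 0"
  shows "pos_def S"
proof -
  define M where "M = F ** A ** transpose F"
  define k where "k = 1/dt + 1/Wi"
  have k: "k > 0" using dt Wi by (simp add: k_def add_pos_pos)
  have e1: "k *\<^sub>R S - ((1/dt) *\<^sub>R M + (1/Wi) *\<^sub>R mat 1) = (1 / dt) *\<^sub>R (S - M) + (1 / Wi) *\<^sub>R (S - mat 1)"
    by (simp add: vec_eq_iff k_def algebra_simps)
  have "k *\<^sub>R S = (1/dt) *\<^sub>R M + (1/Wi) *\<^sub>R mat 1"
    using e1 eq unfolding M_def[symmetric] by simp
  moreover have "S = (1/k) *\<^sub>R (k *\<^sub>R S)" using k by simp
  ultimately have S: "S = (1/k) *\<^sub>R ((1/dt) *\<^sub>R M + (1/Wi) *\<^sub>R mat 1)"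
    by simp
  have At: "transpose A = A" using A by (simp add: pos_def_def)
  have Mt: "transpose M = M" unfolding M_def
    by (simp only: matrix_transpose_mul transpose_transpose At matrix_mul_assoc)
  have qA: "z \<bullet> (A *v z) \<ge> 0" for z
  proof (cases "z = 0")
    case True then show ?thesis by simp
  next
    case False then show ?thesis using A by (auto simp: pos_def_def less_imp_le)
  qed
  have qm: "v \<bullet> (M *v v) \<ge> 0" for v
    unfolding M_def quad_FAF by (rule qA)
  show ?thesis unfolding pos_def_def
  proof safe
    show "transpose S = S" unfolding S
      by (simp add: transpose_scalar transpose_add' Mt)
    fix v :: "real^'n" assume "v \<noteq> 0"
    have "v \<bullet> (S *v v) = (1/k) * ((1/dt) * (v \<bullet> (M *v v)) + (1/Wi) * (v \<bullet> v))"
      unfolding S by (simp add: matrix_vector_mult_add_rdistrib scaleR_matrix_vector_assoc[symmetric] inner_add_right)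
    also have "\<dots> > 0" using k dt Wi qm[of v] \<open>v \<noteq> 0\<close>
      by (intro mult_pos_pos add_nonneg_pos) auto
    finally show "0 < v \<bullet> (S *v v)" .
  qed
qed

lemma finite_corners: "finite (corners :: (real^'d) set)"
proof -
  have "inj_on (\<lambda>c::real^'d. {i. c$i = 1}) corners"
    unfolding inj_on_def corners_def
  proof (clarify, rule vec_eq_iff[THEN iffD2], rule allI)
    fix x y :: "real^'d" and i
    assume x: "\<forall>i. x $ i = 0 \<or> x $ i = 1" and y: "\<forall>i. y $ i = 0 \<or> y $ i = 1"
      and e: "{i. x $ i = 1} = {i. y $ i = 1}"
    from e have "x$i = 1 \<longleftrightarrow> y$i = 1" by blast
    then show "x$i = y$i" using x[rule_format, of i] y[rule_format, of i] by auto
  qed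
  moreover have "finite ((\<lambda>c::real^'d. {i. c$i = 1}) ` corners)" by simp
  ultimately show ?thesis using finite_imageD by blast
qed

lemma shape_corner:
  assumes "c \<in> corners" "c' \<in> corners"
  shows "shape c' c = (if c' = c then 1 else 0)"
proof -
  have ci: "c$i = 0 \<or> c$i = 1" for i using assms(1) by (simp add: corners_def)
  have ci': "c'$i = 0 \<or> c'$i = 1" for i using assms(2) by (simp add: corners_def)
  show ?thesis
  proof (cases "c' = c")
    case True
    have "\<And>i. (if c$i = 1 then c$i else 1 - c$i) = 1"
      subgoal for i using ci[of i] by auto done
    then show ?thesis using True by (simp add: shape_def)
  next
    case False
    then obtain i where i: "c'$i \<noteq> c$i" by (auto simp: vec_eq_iff)
    have "(if c'$i = 1 then c$i else 1 - c$i) = 0"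
      using ci[of i] ci'[of i] i by auto
    then have "\<exists>j\<in>UNIV. (if c'$j = 1 then c$j else 1 - c$j) = 0" by blast
    then have "shape c' c = 0" unfolding shape_def by (intro prod_zero) simp_all
    then show ?thesis using False by simp
  qed
qed

lemma corners_in_cube: assumes h: "c \<in> corners" shows "c \<in> unit_cube"
  unfolding unit_cube_def mem_Collect_eq
proof
  fix i have "c$i = 0 \<or> c$i = 1" using h by (simp add: corners_def)
  then show "0 \<le> c$i \<and> c$i \<le> 1" by auto
qed

lemma qmap_corner:
  assumes "c \<in> corners" shows "qmap X c = X c"
proof -
  have "qmap X c = (\<Sum>c'\<in>corners. (if c' = c then X c' else 0))"
    unfolding qmap_def using shape_corner[OF assms] by (intro sum.cong) auto
  also have "\<dots> = X c" using sum.delta[OF finite_corners, of c X] assms by simp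
  finally show ?thesis .
qed

lemma verts_closure:
  assumes "qmesh \<Omega> T" "x \<in> verts T" shows "x \<in> closure \<Omega>"
proof -
  from assms(2) obtain X c where "X \<in> T" "c \<in> corners" "x = X c" by (auto simp: verts_def)
  then have "x \<in> elem X" unfolding elem_def
    using qmap_corner corners_in_cube by (metis image_eqI)
  moreover have U: "\<Union>(elem ` T) = closure \<Omega>" using assms(1) by (simp add: qmesh_def)
  ultimately show ?thesis using \<open>X \<in> T\<close> by blast
qed

lemma finite_verts: "qmesh \<Omega> T \<Longrightarrow> finite (verts T)"
proof -
  assume "qmesh \<Omega> T"
  then have "finite T" by (simp add: qmesh_def)
  have "verts T = (\<lambda>(X,c). X c) ` (T \<times> corners)" by (auto simp: verts_def)
  then show ?thesis using \<open>finite T\<close> finite_corners by (metis finite_imageI finite_cartesian_product)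
qed

lemma shape_nonneg: "\<xi> \<in> unit_cube \<Longrightarrow> shape c \<xi> \<ge> 0"
  unfolding shape_def unit_cube_def by (intro prod_nonneg) auto

lemma q1_pos_def:
  fixes \<Omega> :: "(real^'d) set" and f :: "real^'d \<Rightarrow> real^'n^'n"
  assumes "qmesh \<Omega> T" "q1_fun \<Omega> T f" "\<forall>x\<in>verts T. pos_def (f x)" "y \<in> closure \<Omega>"
  shows "pos_def (f y)"
proof -
  have U: "\<Union>(elem ` T) = closure \<Omega>" using assms(1) by (simp add: qmesh_def)
  have "y \<in> \<Union>(elem ` T)" using U assms(4) by simp
  then obtain X where X: "X \<in> T" "y \<in> elem X" by blast
  then obtain \<xi> where xi: "\<xi> \<in> unit_cube" "y = qmap X \<xi>" unfolding elem_def by blast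
  have fy: "f y = (\<Sum>c\<in>corners. shape c \<xi> *\<^sub>R f (X c))"
    using assms(2) X xi unfolding q1_fun_def by blast
  define c0 :: "real^'d" where "c0 = (\<chi> i. if \<xi>$i \<ge> 1/2 then 1 else 0)"
  have c0: "c0 \<in> corners" by (simp add: c0_def corners_def)
  have pos: "shape c0 \<xi> > 0" unfolding shape_def c0_def
    using xi(1) by (intro prod_pos) (auto simp: unit_cube_def)
  have all: "\<forall>c\<in>corners. pos_def (f (X c))" using assms(3) X(1) by (auto simp: verts_def)
  have nn: "\<forall>c\<in>corners. shape c \<xi> \<ge> 0" using shape_nonneg[OF xi(1)] by blast
  show ?thesis unfolding fy
    by (rule pos_def_comb[OF finite_corners nn c0 pos all])
qed

lemma admissible_inv:
  assumes "admissible \<Omega> T \<beta> Wi w \<sigma>0 \<Sigma>" "qmesh \<Omega> T" "\<forall>x\<in>closure \<Omega>. pos_def (\<sigma>0 x)"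
  shows "q1_fun \<Omega> T \<Sigma> \<and> (\<forall>x\<in>verts T. pos_def (\<Sigma> x))"
  using assms(1)
proof induction
  case (base \<Sigma>)
  then show ?case using assms(3) verts_closure[OF assms(2)] by auto
qed auto

lemma step_in_closure:
  assumes op: "open \<Omega>" and ne: "\<Omega> \<noteq> {}" and pt: "polytope (closure \<Omega>)" and qm: "qmesh \<Omega> T"
    and tg: "tangential \<Omega> w" and bd: "\<forall>x\<in>verts T \<inter> frontier \<Omega>. u x = w x"
  shows "\<exists>dt>0. \<forall>x\<in>verts T. x - dt *\<^sub>R u x \<in> closure \<Omega>"
proof -
  have "polyhedron (closure \<Omega>)" using pt polytope_imp_polyhedron by blast
  then obtain F where F: "finite F" "closure \<Omega> = affine hull (closure \<Omega>) \<inter> \<Inter>F"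
      "\<forall>h\<in>F. \<exists>a b. a \<noteq> 0 \<and> h = {x. a \<bullet> x \<le> b}"
      "\<forall>F'. F' \<subset> F \<longrightarrow> closure \<Omega> \<subset> affine hull (closure \<Omega>) \<inter> \<Inter>F'"
    unfolding polyhedron_Int_affine_minimal by blast
  obtain a b where ab: "\<forall>h\<in>F. a h \<noteq> 0 \<and> h = {x. a h \<bullet> x \<le> b h}" using F(3) by metis
  have aff: "affine hull (closure \<Omega>) = UNIV" using closure_same_affine_hull affine_hull_open[OF op ne] by simp
  have cl: "closure \<Omega> = \<Inter>F" using F(2) unfolding aff by simp
  have facet: "closure \<Omega> \<inter> {x. a h \<bullet> x = b h} facet_of closure \<Omega>" if "h \<in> F" for h
  proof -
    have "(closure \<Omega> \<inter> {x. a h \<bullet> x = b h} facet_of closure \<Omega>) = (\<exists>h'. h' \<in> F \<and> closure \<Omega> \<inter> {x. a h \<bullet> x = b h} = closure \<Omega> \<inter> {x. a h' \<bullet> x = b h'})"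
      by (rule facet_of_polyhedron_explicit[OF F(1) F(2)]) (use ab F(4) in auto)
    then show ?thesis using that by blast
  qed
  have ev: "eventually (\<lambda>dt. x - dt *\<^sub>R u x \<in> h) (at_right 0)" if x: "x \<in> verts T" and h: "h \<in> F" for x h
  proof -
    define A where "A = a h"
    define B where "B = b h"
    have xc: "x \<in> closure \<Omega>" using verts_closure[OF qm x] .
    have hdef: "h = {x. A \<bullet> x \<le> B}" using ab h unfolding A_def B_def by simp
    have A0: "A \<noteq> 0" using ab h unfolding A_def by simp
    have clh: "closure \<Omega> \<subseteq> h" using cl h by auto
    have hx: "A \<bullet> x \<le> B" using xc clh unfolding hdef by auto
    show ?thesis
    proof (cases "A \<bullet> x < B")
      case True
      have "((\<lambda>dt. A \<bullet> (x - dt *\<^sub>R u x)) \<longlongrightarrow> A \<bullet> (x - 0 *\<^sub>R u x)) (at_right 0)"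
        by (intro tendsto_intros)
      then have "((\<lambda>dt. A \<bullet> (x - dt *\<^sub>R u x)) \<longlongrightarrow> A \<bullet> x) (at_right 0)" by simp
      from order_tendstoD(2)[OF this True] show ?thesis
        unfolding hdef by (auto elim!: eventually_mono)
    next
      case False
      then have eq: "A \<bullet> x = B" using hx by simp
      have "x \<notin> \<Omega>"
      proof
        assume "x \<in> \<Omega>"
        have "\<Omega> \<subseteq> h" using closure_subset clh by (rule order.trans)
        then have "\<Omega> \<subseteq> interior h" using op by (rule interior_maximal)
        also have "interior h = {x. A \<bullet> x < B}" unfolding hdef using A0 by simp
        finally show False using \<open>x \<in> \<Omega>\<close> eq by auto
      qed
      then have "x \<in> frontier \<Omega>" using xc op by (simp add: frontier_def interior_open)
      then have "u x = w x" using bd x by simp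
      moreover have "w x \<bullet> A = 0"
      proof -
        have c1: "closure \<Omega> \<subseteq> {y. A \<bullet> y \<le> B}" using clh unfolding hdef .
        have c2: "(closure \<Omega> \<inter> {y. A \<bullet> y = B}) facet_of (closure \<Omega>)" using facet[OF h] unfolding A_def B_def .
        have c3: "x \<in> closure \<Omega> \<inter> {y. A \<bullet> y = B}" using xc eq by simp
        show ?thesis using tg c1 c2 c3 unfolding tangential_def by (elim allE[of _ A] allE[of _ B]) simp
      qed
      ultimately have "A \<bullet> (x - dt *\<^sub>R u x) = B" for dt
        by (simp add: inner_diff_right inner_commute eq)
      then show ?thesis unfolding hdef by (intro always_eventually) simp
    qed
  qed
  have "eventually (\<lambda>dt. \<forall>x\<in>verts T. \<forall>h\<in>F. x - dt *\<^sub>R u x \<in> h) (at_right 0)"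
    using ev finite_verts[OF qm] F(1) by (intro eventually_ball_finite ballI) auto
  then obtain e :: real where e: "e > 0" "\<forall>y>0. y < e \<longrightarrow> (\<forall>x\<in>verts T. \<forall>h\<in>F. x - y *\<^sub>R u x \<in> h)"
    unfolding eventually_at_right_field by auto
  then have "\<forall>x\<in>verts T. x - (e/2) *\<^sub>R u x \<in> closure \<Omega>" using cl by auto
  then show ?thesis using e(1) by (intro exI[of _ "e/2"]) auto
qed

theorem proposition5:
  fixes \<Omega> :: "(real^'d) set" and T :: "(real^'d \<Rightarrow> real^'d) set"
    and \<beta> Wi :: real and w :: "real^'d \<Rightarrow> real^'d"
    and \<sigma>0 \<Sigma> :: "real^'d \<Rightarrow> real^'d^'d"
    and u :: "real^'d \<Rightarrow> real^'d" and p :: "real^'d \<Rightarrow> real"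
  assumes "CARD('d) = 2 \<or> CARD('d) = 3"
    and "open \<Omega>" and "convex \<Omega>" and "bounded \<Omega>" and "\<Omega> \<noteq> {}"
    and "polytope (closure \<Omega>)"
    and "qmesh \<Omega> T"
    and "Wi > 0" and "0 < \<beta>" and "\<beta> < 1"
    and "tangential \<Omega> w"
    and "\<forall>x\<in>closure \<Omega>. pos_def (\<sigma>0 x)"
    and "admissible \<Omega> T \<beta> Wi w \<sigma>0 \<Sigma>"
    and "stokes_step \<Omega> T \<beta> Wi w \<Sigma> u p"
  shows "\<exists>dt>0.
     (\<forall>S. (\<forall>x\<in>verts T. transport_eq T Wi dt u \<Sigma> x (S x)) \<longrightarrow> (\<forall>x\<in>verts T. pos_def (S x))) \<and>
     (\<forall>\<Sigma>'. q1_fun \<Omega> T \<Sigma>' \<and> (\<forall>x\<in>verts T. transport_eq T Wi dt u \<Sigma> x (\<Sigma>' x)) \<longrightarrow>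
        (\<forall>x\<in>closure \<Omega>. pos_def (\<Sigma>' x)))"
proof -
  have inv: "q1_fun \<Omega> T \<Sigma>" "\<forall>x\<in>verts T. pos_def (\<Sigma> x)"
    using admissible_inv[OF assms(13,7,12)] by auto
  have bd: "\<forall>x\<in>verts T \<inter> frontier \<Omega>. u x = w x" using assms(14) by (simp add: stokes_step_def)
  obtain dt where dt: "dt > 0" "\<forall>x\<in>verts T. x - dt *\<^sub>R u x \<in> closure \<Omega>"
    using step_in_closure[OF assms(2,5,6,7,11) bd] by blast
  have A: "\<forall>x\<in>verts T. pos_def (S x)" if "\<forall>x\<in>verts T. transport_eq T Wi dt u \<Sigma> x (S x)" for S
  proof
    fix x assume x: "x \<in> verts T"
    have pd: "pos_def (\<Sigma> (x - dt *\<^sub>R u x))"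
      using q1_pos_def[OF assms(7) inv] dt(2) x by blast
    show "pos_def (S x)"
      using that x unfolding transport_eq_def Let_def
      by (intro transport_pd[OF dt(1) assms(8) pd]) auto
  qed
  show ?thesis
  proof (intro exI[of _ dt] conjI allI impI)
    show "dt > 0" by (rule dt(1))
  next
    fix S assume "\<forall>x\<in>verts T. transport_eq T Wi dt u \<Sigma> x (S x)"
    then show "\<forall>x\<in>verts T. pos_def (S x)" by (rule A)
  next
    fix \<Sigma>' assume h: "q1_fun \<Omega> T \<Sigma>' \<and> (\<forall>x\<in>verts T. transport_eq T Wi dt u \<Sigma> x (\<Sigma>' x))"
    then have "\<forall>x\<in>verts T. pos_def (\<Sigma>' x)" using A by blast
    then show "\<forall>x\<in>closure \<Omega>. pos_def (\<Sigma>' x)"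
      using q1_pos_def[OF assms(7)] h by blast
  qed
qed

end
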